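(* Let $G$ be an edge-colored graph of order $n\geq3$. If $e(G)+c(G)\geq\binom{n+1}{2}$ and $G$ contains exactly one rainbow triangle, then $e(G)+c(G)=\binom{n+1}{2}$ and $G$ is complete.
   Context: An edge-colored graph is a finite simple graph $G$ with a map $C:E(G)\to\mathbb{N}$. $e(G)=|E(G)|$, $c(G)$ is the number of distinct colors appearing on $E(G)$. A subgraph is rainbow if all its edges have distinct colors. *)

theory Defs
  imports Main
begin

(* A finite simple graph: finite vertex set V and edge set E of 2-element subsets of V.
   An edge-coloring is a map C from edges to nat (only values on E matter). *)
definition simple_graph :: "'a set \<Rightarrow> 'a set set \<Rightarrow> bool" where
  "simple_graph V E \<longleftrightarrow> finite V \<and> E \<subseteq> {e. e \<subseteq> V \<and> card e = 2}"

definition num_colors :: "'a set set \<Rightarrow> ('a set \<Rightarrow> nat) \<Rightarrow> nat" where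
  "num_colors E C = card (C ` E)"

definition rainbow_triangles :: "'a set set \<Rightarrow> ('a set \<Rightarrow> nat) \<Rightarrow> 'a set set" where
  "rainbow_triangles E C = {{x, y, z} | x y z.
     x \<noteq> y \<and> y \<noteq> z \<and> x \<noteq> z \<and>
     {x, y} \<in> E \<and> {y, z} \<in> E \<and> {x, z} \<in> E \<and>
     C {x, y} \<noteq> C {y, z} \<and> C {y, z} \<noteq> C {x, z} \<and> C {x, y} \<noteq> C {x, z}}"

definition complete_graph :: "'a set \<Rightarrow> 'a set set \<Rightarrow> bool" where
  "complete_graph V E \<longleftrightarrow> E = {e. e \<subseteq> V \<and> card e = 2}"

end

theory Submission
  imports Defs
begin


definition nb :: "'a set set \<Rightarrow> 'a \<Rightarrow> 'a set" where "nb E v = {y. {v,y} \<in> E}"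
definition Ev :: "'a set set \<Rightarrow> 'a \<Rightarrow> 'a set set" where "Ev E v = {e \<in> E. v \<notin> e}"
definition Sc :: "'a set set \<Rightarrow> ('a set \<Rightarrow> nat) \<Rightarrow> 'a \<Rightarrow> nat set" where
  "Sc E C v = C ` E - C ` Ev E v"
definition rb :: "'a set set \<Rightarrow> ('a set \<Rightarrow> nat) \<Rightarrow> 'a \<Rightarrow> 'a \<Rightarrow> 'a \<Rightarrow> bool" where
  "rb E C x y z \<longleftrightarrow> x \<noteq> y \<and> y \<noteq> z \<and> x \<noteq> z \<and>
     {x, y} \<in> E \<and> {y, z} \<in> E \<and> {x, z} \<in> E \<and>
     C {x, y} \<noteq> C {y, z} \<and> C {y, z} \<noteq> C {x, z} \<and> C {x, y} \<noteq> C {x, z}"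

lemma mem_rt: "t \<in> rainbow_triangles E C \<longleftrightarrow> (\<exists>p q r. t = {p,q,r} \<and> rb E C p q r)"
  unfolding rainbow_triangles_def rb_def by blast

lemma binom2: "(Suc m) choose 2 = m + (m choose 2)"
  by (simp add: numeral_2_eq_2)

lemma edge_prop: "simple_graph V E \<Longrightarrow> e \<in> E \<Longrightarrow> e \<subseteq> V \<and> card e = 2"
  unfolding simple_graph_def by auto

lemma finE: "simple_graph V E \<Longrightarrow> finite E"
proof -
  assume "simple_graph V E"
  then have "E \<subseteq> Pow V" "finite V" unfolding simple_graph_def by auto
  then show ?thesis using finite_subset by blast
qed

lemma pair_neq: "card {a,b} = 2 \<Longrightarrow> a \<noteq> b"
  by auto

lemma nb_sub: "simple_graph V E \<Longrightarrow> nb E v \<subseteq> V - {v}"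
proof
  fix y assume sg: "simple_graph V E" and y: "y \<in> nb E v"
  then have "{v,y} \<in> E" unfolding nb_def by auto
  then have "{v,y} \<subseteq> V" "card {v,y} = 2" using edge_prop[OF sg] by auto
  then show "y \<in> V - {v}" using pair_neq by fastforce
qed

lemma card_split: assumes sg: "simple_graph V E"
  shows "card E = card (Ev E v) + card (nb E v)"
proof -
  have fE: "finite E" using finE[OF sg] .
  have fV: "finite V" using sg unfolding simple_graph_def by auto
  have eq: "{e \<in> E. v \<in> e} = (\<lambda>y. {v,y}) ` nb E v"
  proof
    show "{e \<in> E. v \<in> e} \<subseteq> (\<lambda>y. {v,y}) ` nb E v"
    proof
      fix e assume e: "e \<in> {e \<in> E. v \<in> e}"
      then have "card e = 2" using edge_prop[OF sg] by auto
      then obtain a b where ab: "e = {a,b}" "a \<noteq> b" by (auto simp: card_2_iff)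
      show "e \<in> (\<lambda>y. {v,y}) ` nb E v"
      proof (cases "v = a")
        case True
        then show ?thesis using e ab unfolding nb_def by auto
      next
        case False
        then have "v = b" using e ab by auto
        then show ?thesis using e ab unfolding nb_def by (auto simp: insert_commute)
      qed
    qed
    show "(\<lambda>y. {v,y}) ` nb E v \<subseteq> {e \<in> E. v \<in> e}" unfolding nb_def by auto
  qed
  have inj: "inj_on (\<lambda>y. {v,y}) (nb E v)"
    by (rule inj_onI) (auto simp: doubleton_eq_iff)
  have "E = Ev E v \<union> {e \<in> E. v \<in> e}" unfolding Ev_def by auto
  moreover have "Ev E v \<inter> {e \<in> E. v \<in> e} = {}" unfolding Ev_def by auto
  ultimately have "card E = card (Ev E v) + card {e \<in> E. v \<in> e}"
    using fE by (metis (no_types, lifting) card_Un_disjoint finite_Un)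
  also have "card {e \<in> E. v \<in> e} = card (nb E v)" using eq card_image[OF inj] by simp
  finally show ?thesis .
qed

lemma col_split: assumes "finite E"
  shows "card (C ` E) \<le> card (C ` Ev E v) + card (Sc E C v)"
proof -
  have "C ` E \<subseteq> C ` Ev E v \<union> Sc E C v" unfolding Sc_def by auto
  then have "card (C ` E) \<le> card (C ` Ev E v \<union> Sc E C v)"
    using assms by (intro card_mono) (auto simp: Sc_def Ev_def)
  also have "\<dots> \<le> card (C ` Ev E v) + card (Sc E C v)" by (rule card_Un_le)
  finally show ?thesis .
qed

lemma Xprops:
  assumes sg: "simple_graph V E" and nr: "rainbow_triangles E C = {}"
  shows "\<exists>X. X \<subseteq> nb E v \<and> card X = card (Sc E C v) \<and> (\<forall>x\<in>X. \<forall>y\<in>X. x \<noteq> y \<longrightarrow> {x,y} \<notin> E)"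
proof -
  have ex: "\<exists>y. {v,y} \<in> E \<and> C {v,y} = a" if a: "a \<in> Sc E C v" for a
  proof -
    from a obtain e where e: "e \<in> E" "C e = a" "v \<in> e" unfolding Sc_def Ev_def by auto
    then have "card e = 2" using edge_prop[OF sg] by auto
    then obtain p q where "e = {p,q}" "p\<noteq>q" by (auto simp: card_2_iff)
    with e show ?thesis by (auto simp: insert_commute)
  qed
  define f where "f a = (SOME y. {v,y} \<in> E \<and> C {v,y} = a)" for a
  have f: "{v, f a} \<in> E \<and> C {v, f a} = a" if "a \<in> Sc E C v" for a
    using someI_ex[OF ex[OF that]] unfolding f_def by blast
  have inj: "inj_on f (Sc E C v)" by (metis f inj_onI)
  define X where "X = f ` Sc E C v"
  have "X \<subseteq> nb E v" using f unfolding X_def nb_def by auto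
  moreover have "card X = card (Sc E C v)" using card_image[OF inj] X_def by simp
  moreover have "\<forall>x\<in>X. \<forall>y\<in>X. x\<noteq>y \<longrightarrow> {x,y} \<notin> E"
  proof (intro ballI impI)
    fix x y assume "x \<in> X" "y \<in> X" "x \<noteq> y"
    then obtain a b where ab: "a \<in> Sc E C v" "b \<in> Sc E C v" "x = f a" "y = f b" unfolding X_def by auto
    show "{x,y} \<notin> E"
    proof
      assume xy: "{x,y} \<in> E"
      have vx: "{v,x} \<in> E" "C{v,x} = a" using f ab by auto
      have vy: "{v,y} \<in> E" "C{v,y} = b" using f ab by auto
      have "a \<noteq> b" using \<open>x\<noteq>y\<close> ab by auto
      have "card {v,x} = 2" "card {v,y} = 2" using vx vy edge_prop[OF sg] by auto
      then have "v \<noteq> x" "v \<noteq> y" using pair_neq by auto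
      then have "{x,y} \<in> Ev E v" using xy unfolding Ev_def by auto
      then have cxy: "C {x,y} \<in> C ` Ev E v" by (rule imageI)
      have "a \<notin> C ` Ev E v" "b \<notin> C ` Ev E v" using ab(1,2) unfolding Sc_def by auto
      then have "C {x,y} \<noteq> a" "C{x,y} \<noteq> b" using cxy by metis+
      then have "rb E C v x y" unfolding rb_def using vx vy xy \<open>a\<noteq>b\<close> \<open>v\<noteq>x\<close> \<open>v\<noteq>y\<close> \<open>x\<noteq>y\<close> by auto
      then have "{v,x,y} \<in> rainbow_triangles E C" unfolding mem_rt by blast
      then show False using nr by simp
    qed
  qed
  ultimately show ?thesis by blast
qed

lemma Xdeg:
  assumes sg: "simple_graph V E" and X: "X \<subseteq> nb E v" and ind: "\<forall>x\<in>X. \<forall>y\<in>X. x \<noteq> y \<longrightarrow> {x,y} \<notin> E"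
    and x: "x \<in> X"
  shows "card (nb E x) + card X \<le> card V"
proof -
  have fV: "finite V" using sg unfolding simple_graph_def by auto
  have XV: "X \<subseteq> V" using X nb_sub[OF sg] by auto
  have "nb E x \<subseteq> V - X"
  proof
    fix y assume y: "y \<in> nb E x"
    then have "y \<in> V - {x}" using nb_sub[OF sg] by auto
    moreover have "y \<notin> X" using y ind x calculation unfolding nb_def by auto
    ultimately show "y \<in> V - X" by auto
  qed
  then have "card (nb E x) \<le> card (V - X)" using fV by (intro card_mono) auto
  also have "\<dots> = card V - card X" using XV fV by (simp add: card_Diff_subset finite_subset)
  finally show ?thesis using card_mono[OF fV XV] by linarith
qed



lemma contra:
  fixes s d :: "'a \<Rightarrow> nat"
  assumes fV: "finite V" and ne: "V \<noteq> {}" and fB: "finite B" and cB: "card B \<le> 2"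
    and XV: "\<forall>v\<in>V. X v \<subseteq> V - {v}" and cX: "\<forall>v\<in>V. card (X v) = s v"
    and dX: "\<forall>v\<in>V. \<forall>x\<in>X v. d x + s v \<le> N"
    and lo: "\<forall>v\<in>V. N \<le> d v + s v" and lo2: "\<forall>v\<in>V-B. N + 1 \<le> d v + s v"
    and s2: "\<forall>v\<in>V. 2 \<le> s v"
  shows False
proof -
  define m where "m = Max (s ` V)"
  have mx: "\<forall>v\<in>V. s v \<le> m" unfolding m_def using fV by auto
  have "m \<in> s ` V" unfolding m_def using fV ne by (intro Max_in) auto
  then obtain v0 where v0: "v0 \<in> V" "s v0 = m" by auto
  have key: "X v \<subseteq> B \<and> (\<forall>x\<in>X v. s x = m)" if v: "v \<in> V" "s v = m" for v
  proof -
    have A: "x \<in> B \<and> s x = m" if x: "x \<in> X v" for x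
    proof -
      have xV: "x \<in> V" using XV v x by auto
      have "d x + m \<le> N" using dX v x by auto
      moreover have "N \<le> d x + s x" using lo xV by auto
      moreover have "s x \<le> m" using mx xV by auto
      ultimately have sx: "s x = m" by linarith
      have "x \<in> B"
      proof (rule ccontr)
        assume "x \<notin> B"
        then have "N + 1 \<le> d x + s x" using lo2 xV by auto
        then show False using sx \<open>d x + m \<le> N\<close> by linarith
      qed
      then show ?thesis using sx by auto
    qed
    then show ?thesis by auto
  qed
  have "card (X v0) \<ge> 2" using cX s2 v0 by auto
  then have "X v0 \<noteq> {}" by auto
  then obtain x0 where x0: "x0 \<in> X v0" by auto
  have x0V: "x0 \<in> V" using XV v0 x0 by auto
  have sx0: "s x0 = m" "x0 \<in> B" using key[OF v0] x0 by auto
  have "X x0 \<subseteq> B - {x0}" using key[OF x0V sx0(1)] XV x0V by auto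
  then have "card (X x0) \<le> card (B - {x0})" using fB by (intro card_mono) auto
  also have "\<dots> \<le> 1" using cB sx0(2) fB by auto
  finally have "card (X x0) \<le> 1" .
  moreover have "card (X x0) \<ge> 2" using cX s2 x0V by auto
  ultimately show False by linarith
qed

lemma sg_del: "simple_graph V E \<Longrightarrow> simple_graph (V - {v}) (Ev E v)"
  unfolding simple_graph_def Ev_def by auto

lemma rt_mono: "E' \<subseteq> E \<Longrightarrow> rainbow_triangles E' C \<subseteq> rainbow_triangles E C"
  unfolding rainbow_triangles_def by blast

lemma cg_del: assumes "complete_graph V E" shows "complete_graph (V - {v}) (Ev E v)"
proof -
  have h: "E = {e. e \<subseteq> V \<and> card e = 2}" using assms unfolding complete_graph_def by simp
  show ?thesis unfolding complete_graph_def Ev_def h by auto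
qed

lemma ncg_del: "u \<in> V \<Longrightarrow> w \<in> V \<Longrightarrow> u \<noteq> w \<Longrightarrow> {u,w} \<notin> E \<Longrightarrow> v \<noteq> u \<Longrightarrow> v \<noteq> w
  \<Longrightarrow> \<not> complete_graph (V - {v}) (Ev E v)"
proof
  assume a: "u \<in> V" "w \<in> V" "u \<noteq> w" "{u,w} \<notin> E" "v \<noteq> u" "v \<noteq> w"
    and "complete_graph (V - {v}) (Ev E v)"
  then have "Ev E v = {e. e \<subseteq> V - {v} \<and> card e = 2}" by (simp add: complete_graph_def)
  moreover have "{u,w} \<in> {e. e \<subseteq> V - {v} \<and> card e = 2}" using a by auto
  ultimately have "{u,w} \<in> Ev E v" by simp
  then show False using a by (simp add: Ev_def)
qed

lemma ncg_ex: assumes "simple_graph V E" "\<not> complete_graph V E"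
  shows "\<exists>u w. u \<in> V \<and> w \<in> V \<and> u \<noteq> w \<and> {u,w} \<notin> E"
proof -
  have "E \<subseteq> {e. e \<subseteq> V \<and> card e = 2}" using assms unfolding simple_graph_def by auto
  then obtain e where e: "e \<subseteq> V" "card e = 2" "e \<notin> E" using assms(2) unfolding complete_graph_def by auto
  then obtain a b where "e = {a,b}" "a \<noteq> b" by (auto simp: card_2_iff)
  then show ?thesis using e by auto
qed



lemma mainA:
  "simple_graph V E \<Longrightarrow> card V = n \<Longrightarrow> 1 \<le> n \<Longrightarrow> rainbow_triangles E C = {} \<Longrightarrow>
   card E + card (C ` E) + 1 + (if complete_graph V E then 0 else 1) \<le> (n + 1) choose 2"
proof (induction n arbitrary: V E)
  case 0
  then show ?case by simp
next
  case (Suc n)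
  note sg = Suc.prems(1) and cV = Suc.prems(2) and nr = Suc.prems(4)
  have fV: "finite V" using sg unfolding simple_graph_def by auto
  have fE: "finite E" using finE[OF sg] .
  show ?case
  proof (cases "n = 0")
    case True
    then have "card V = 1" using cV by simp
    then obtain a where a: "V = {a}" by (auto simp: card_1_singleton_iff)
    have two: "{e. e \<subseteq> V \<and> card e = 2} = {}"
    proof -
      have "card e \<noteq> 2" if "e \<subseteq> V" for e
        using card_mono[OF fV that] \<open>card V = 1\<close> by simp
      then show ?thesis by blast
    qed
    then have "E = {}" using sg unfolding simple_graph_def by blast
    then have "complete_graph V E" unfolding complete_graph_def using two by simp
    then show ?thesis using \<open>E = {}\<close> True by (simp add: numeral_2_eq_2)
  next
    case False
    then have n1: "1 \<le> n" by simp
    define d where "d v = card (nb E v)" for v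
    define s where "s v = card (Sc E C v)" for v
    have IH: "card (Ev E v) + card (C ` Ev E v) + 1 +
        (if complete_graph (V - {v}) (Ev E v) then 0 else 1) \<le> (n + 1) choose 2"
      if v: "v \<in> V" for v
    proof -
      have "card (V - {v}) = n" using cV v fV by simp
      moreover have "rainbow_triangles (Ev E v) C = {}"
        using rt_mono[of "Ev E v" E C] nr unfolding Ev_def by auto
      ultimately show ?thesis using Suc.IH[OF sg_del[OF sg] _ n1] by blast
    qed
    have tot: "card E + card (C ` E) \<le> card (Ev E v) + card (C ` Ev E v) + d v + s v" for v
      using card_split[OF sg, of v] col_split[OF fE, of C v] unfolding d_def s_def by linarith
    have b2: "(Suc n + 1) choose 2 = (n + 1) + ((n + 1) choose 2)" using binom2[of "n+1"] by simp
    have dle: "d v + 1 \<le> Suc n" if "v \<in> V" for v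
    proof -
      have "d v \<le> card (V - {v})" unfolding d_def using nb_sub[OF sg] fV by (intro card_mono) auto
      then show ?thesis using cV that fV by simp
    qed
    show ?thesis
    proof (cases "\<exists>v\<in>V. d v + s v + 1 \<le> Suc n")
      case True
      then obtain v where v: "v \<in> V" "d v + s v + 1 \<le> Suc n" by blast
      have "card (Ev E v) + card (C ` Ev E v) + 1 \<le> (n + 1) choose 2" using IH[OF v(1)] by linarith
      then show ?thesis using tot[of v] v(2) b2 by simp
    next
      case c1: False
      show ?thesis
      proof (cases "\<exists>v\<in>V. d v + s v \<le> Suc n \<and> (complete_graph (V - {v}) (Ev E v) = complete_graph V E)")
        case True
        then obtain v where v: "v \<in> V" "d v + s v \<le> Suc n"
          "complete_graph (V - {v}) (Ev E v) = complete_graph V E" by blast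
        define k :: nat where "k = (if complete_graph V E then 0 else 1)"
        have "card (Ev E v) + card (C ` Ev E v) + 1 + k \<le> (n + 1) choose 2"
          using IH[OF v(1)] v(3) unfolding k_def by simp
        then have "card E + card (C ` E) + 1 + k \<le> (Suc n + 1) choose 2"
          using tot[of v] v(2) b2 by linarith
        then show ?thesis unfolding k_def .
      next
        case c2: False
        have Xex: "\<forall>v\<in>V. \<exists>X. X \<subseteq> nb E v \<and> card X = s v \<and> (\<forall>x\<in>X. \<forall>y\<in>X. x \<noteq> y \<longrightarrow> {x,y} \<notin> E)"
          using Xprops[OF sg nr] unfolding s_def by blast
        from bchoice[OF Xex] obtain X where X: "\<forall>v\<in>V. X v \<subseteq> nb E v \<and> card (X v) = s v \<and> (\<forall>x\<in>X v. \<forall>y\<in>X v. x \<noteq> y \<longrightarrow> {x,y} \<notin> E)"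
          ..
        have XV: "\<forall>v\<in>V. X v \<subseteq> V - {v}" using X nb_sub[OF sg] by blast
        have dX: "\<forall>v\<in>V. \<forall>x\<in>X v. d x + s v \<le> Suc n"
        proof (intro ballI)
          fix v x assume "v \<in> V" "x \<in> X v"
          then show "d x + s v \<le> Suc n" using Xdeg[OF sg, of "X v" v x] X cV unfolding d_def by auto
        qed
        have lo: "\<forall>v\<in>V. Suc n \<le> d v + s v" using c1 by auto
        have ne: "V \<noteq> {}" using cV by auto
        show ?thesis
        proof (cases "complete_graph V E")
          case True
          have lo2: "\<forall>v\<in>V-{}. Suc n + 1 \<le> d v + s v" using c2 cg_del[OF True] True by auto
          have s2: "\<forall>v\<in>V. 2 \<le> s v"
          proof
            fix v assume v: "v \<in> V"
            then have "Suc n + 1 \<le> d v + s v" "d v + 1 \<le> Suc n" using lo2 dle by auto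
            then show "2 \<le> s v" by linarith
          qed
          show ?thesis using contra[OF fV ne _ _ XV _ dX lo lo2 s2] X by simp
        next
          case False
          then obtain u w where uw: "u \<in> V" "w \<in> V" "u \<noteq> w" "{u,w} \<notin> E" using ncg_ex[OF sg] by blast
          have lo2: "\<forall>v\<in>V-{u,w}. Suc n + 1 \<le> d v + s v"
          proof
            fix v assume v: "v \<in> V - {u,w}"
            then have "\<not> complete_graph (V - {v}) (Ev E v)" using ncg_del[OF uw] by auto
            then have "\<not> d v + s v \<le> Suc n" using c2 False v by auto
            then show "Suc n + 1 \<le> d v + s v" by linarith
          qed
          have du: "d u + 2 \<le> Suc n" "d w + 2 \<le> Suc n"
          proof -
            have "nb E u \<subseteq> V - {u,w}" using nb_sub[OF sg, of u] uw(4) unfolding nb_def by auto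
            then have "d u \<le> card (V - {u,w})" unfolding d_def using fV by (intro card_mono) auto
            then show "d u + 2 \<le> Suc n" using cV uw fV n1 by (simp add: card_Diff_subset)
            have "{w,u} \<notin> E" using uw(4) by (simp add: insert_commute)
            then have "nb E w \<subseteq> V - {u,w}" using nb_sub[OF sg, of w] unfolding nb_def by auto
            then have "d w \<le> card (V - {u,w})" unfolding d_def using fV by (intro card_mono) auto
            then show "d w + 2 \<le> Suc n" using cV uw fV n1 by (simp add: card_Diff_subset)
          qed
          have s2: "\<forall>v\<in>V. 2 \<le> s v"
          proof
            fix v assume v: "v \<in> V"
            show "2 \<le> s v"
            proof (cases "v \<in> {u,w}")
              case True
              then have "d v + 2 \<le> Suc n" using du by auto
              then show ?thesis using lo v by fastforce
            next
              case False
              then have "Suc n + 1 \<le> d v + s v" using lo2 v by auto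
              then show ?thesis using dle[OF v] by linarith
            qed
          qed
          have "card {u,w} \<le> 2" by (simp add: card_insert_if)
          then show ?thesis using contra[OF fV ne _ _ XV _ dX lo lo2 s2] X by simp
        qed
      qed
    qed
  qed
qed



lemma K: "{p,q,r} = {x,y,z} \<Longrightarrow> p\<noteq>q \<Longrightarrow> q\<noteq>r \<Longrightarrow> p\<noteq>r \<Longrightarrow> x\<noteq>y \<Longrightarrow> {x,y} \<in> {{p,q},{q,r},{p,r}}"
proof -
  assume h: "{p,q,r} = {x,y,z}" "p\<noteq>q" "q\<noteq>r" "p\<noteq>r" "x\<noteq>y"
  have "x \<in> {p,q,r}" "y \<in> {p,q,r}" using h(1) by blast+
  then have "(x=p \<or> x=q \<or> x=r) \<and> (y=p \<or> y=q \<or> y=r)" by blast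
  then show ?thesis using h(5) by (elim conjE disjE) (simp_all add: insert_commute)
qed

lemma rb_perm1: "rb E C p q r \<Longrightarrow> rb E C q r p"
  unfolding rb_def by (auto simp: insert_commute)

lemma rb_perm2: "rb E C p q r \<Longrightarrow> rb E C p r q"
  unfolding rb_def by (auto simp: insert_commute)

lemma rb_dist: "rb E C p q r \<Longrightarrow> f \<in> {{p,q},{q,r},{p,r}} \<Longrightarrow> g \<in> {{p,q},{q,r},{p,r}} \<Longrightarrow> f \<noteq> g \<Longrightarrow> C f \<noteq> C g"
  unfolding rb_def by auto

lemma rb_cong: "(\<forall>f\<in>{{p,q},{q,r},{p,r}}. C' f = C f) \<Longrightarrow> rb E C' p q r = rb E C p q r"
  unfolding rb_def by simp

lemma rb_sub: "E' \<subseteq> E \<Longrightarrow> rb E' C p q r \<Longrightarrow> rb E C p q r"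
  unfolding rb_def by auto

lemma rb_edges: "rb E C p q r \<Longrightarrow> {{p,q},{q,r},{p,r}} \<subseteq> E \<and> p \<noteq> q \<and> q \<noteq> r \<and> p \<noteq> r"
  unfolding rb_def by auto

lemma R2core:
  assumes r: "rb E C' p q r" and e1: "e1 = {p,q}" and C': "C' = C(e1 := k)"
    and u: "\<forall>e'\<in>E. C e' = C e1 \<longrightarrow> e' = e1" and nr: "\<not> rb E C p q r"
  shows False
proof -
  have d: "p \<noteq> q" "q \<noteq> r" "p \<noteq> r" "{p,q} \<in> E" "{q,r} \<in> E" "{p,r} \<in> E"
    using r unfolding rb_def by auto
  have n1: "{q,r} \<noteq> e1" "{p,r} \<noteq> e1" using d e1 by (auto simp: doubleton_eq_iff)
  then have c: "C' {q,r} = C {q,r}" "C' {p,r} = C {p,r}" using C' by auto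
  have "C {p,q} = C {q,r} \<or> C {q,r} = C {p,r} \<or> C {p,q} = C {p,r}"
    using nr d unfolding rb_def by auto
  moreover have "C {q,r} \<noteq> C e1" using u d n1 by auto
  moreover have "C {p,r} \<noteq> C e1" using u d n1 by auto
  moreover have "C' {q,r} \<noteq> C' {p,r}" using r unfolding rb_def by auto
  ultimately show False using c e1 by auto
qed



theorem lemma6:
  fixes V :: "'a set" and E :: "'a set set" and C :: "'a set \<Rightarrow> nat"
  assumes "simple_graph V E"
    and "card V \<ge> 3"
    and "card E + num_colors E C \<ge> (card V + 1) choose 2"
    and "card (rainbow_triangles E C) = 1"
  shows "card E + num_colors E C = (card V + 1) choose 2 \<and> complete_graph V E"
proof -
  note sg = assms(1)
  define n where "n = card V"
  have n1: "1 \<le> n" using assms(2) n_def by simp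
  have fE: "finite E" using finE[OF sg] .
  have ge: "(n + 1) choose 2 \<le> card E + card (C ` E)" using assms(3) n_def unfolding num_colors_def by simp
  obtain T where rt: "rainbow_triangles E C = {T}" using assms(4) by (auto simp: card_1_singleton_iff)
  then obtain x y z where T: "T = {x,y,z}" and rxyz: "rb E C x y z" using mem_rt[of T E C] by auto
  define e1 where "e1 = {x,y}"
  define e2 where "e2 = {y,z}"
  have e1E: "e1 \<in> E" and e2E: "e2 \<in> E" and c12: "C e1 \<noteq> C e2"
    using rxyz unfolding rb_def e1_def e2_def by auto
  have e12: "e1 \<noteq> e2" using c12 by auto
  have xyz: "x \<noteq> y" "y \<noteq> z" "x \<noteq> z" using rxyz unfolding rb_def by auto
  have onlyT: "{p,q,r} = {x,y,z}" if "rb E C p q r" for p q r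
  proof -
    have "{p,q,r} \<in> rainbow_triangles E C" using that mem_rt by blast
    then show ?thesis using rt T by simp
  qed
  have inP: "e1 \<in> {{p,q},{q,r},{p,r}} \<and> e2 \<in> {{p,q},{q,r},{p,r}}"
    if "{p,q,r} = {x,y,z}" "p \<noteq> q" "q \<noteq> r" "p \<noteq> r" for p q r
  proof -
    have "e1 \<in> {{p,q},{q,r},{p,r}}" unfolding e1_def using K[OF that xyz(1)] .
    moreover have "{p,q,r} = {y,z,x}" using that(1) by (auto simp: insert_commute)
    then have "e2 \<in> {{p,q},{q,r},{p,r}}" unfolding e2_def using K[OF _ that(2-4) xyz(2)] by blast
    ultimately show ?thesis by blast
  qed
  have e1V: "e1 \<subseteq> V" "card e1 = 2" using edge_prop[OF sg e1E] by auto
  show ?thesis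
  proof (cases "\<exists>e'\<in>E. e' \<noteq> e1 \<and> C e' = C e1")
    case True
    define E' where "E' = E - {e1}"
    have sg': "simple_graph V E'" using sg unfolding simple_graph_def E'_def by auto
    have nr: "rainbow_triangles E' C = {}"
    proof (rule ccontr)
      assume "rainbow_triangles E' C \<noteq> {}"
      then obtain t where "t \<in> rainbow_triangles E' C" by blast
      then obtain p q r where r: "rb E' C p q r" using mem_rt[of t E' C] by auto
      have "E' \<subseteq> E" unfolding E'_def by auto
      then have "rb E C p q r" using rb_sub[OF _ r] by simp
      then have eq: "{p,q,r} = {x,y,z}" by (rule onlyT)
      have ed: "{{p,q},{q,r},{p,r}} \<subseteq> E'" "p \<noteq> q" "q \<noteq> r" "p \<noteq> r" using rb_edges[OF r] by auto
      have "e1 \<in> {{p,q},{q,r},{p,r}}" using inP[OF eq ed(2-4)] by simp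
      then have "e1 \<in> E'" using ed(1) by blast
      then show False unfolding E'_def by simp
    qed
    have ncg: "\<not> complete_graph V E'"
    proof
      assume "complete_graph V E'"
      then have "E' = {e. e \<subseteq> V \<and> card e = 2}" unfolding complete_graph_def .
      then have "e1 \<in> E'" using e1V by blast
      then show False unfolding E'_def by simp
    qed
    have cols: "C ` E' = C ` E"
    proof
      show "C ` E' \<subseteq> C ` E" unfolding E'_def by auto
      show "C ` E \<subseteq> C ` E'"
      proof
        fix c assume "c \<in> C ` E"
        then obtain e where e: "e \<in> E" "c = C e" by auto
        show "c \<in> C ` E'"
        proof (cases "e = e1")
          case True
          then obtain e' where "e' \<in> E" "e' \<noteq> e1" "C e' = c" using \<open>\<exists>e'\<in>E. e' \<noteq> e1 \<and> C e' = C e1\<close> e by auto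
          then show ?thesis unfolding E'_def by force
        next
          case False
          then show ?thesis using e unfolding E'_def by auto
        qed
      qed
    qed
    have cE: "card E' + 1 = card E" unfolding E'_def using card_Suc_Diff1[OF fE e1E] by simp
    have "card E' + card (C ` E') + 1 + (if complete_graph V E' then 0 else 1) \<le> (n + 1) choose 2"
      using mainA[OF sg' n_def[symmetric] n1 nr] .
    then have False using ncg cols cE ge by simp
    then show ?thesis ..
  next
    case False
    then have u: "\<forall>e'\<in>E. C e' = C e1 \<longrightarrow> e' = e1" by auto
    define C' where "C' = C(e1 := C e2)"
    have nr: "rainbow_triangles E C' = {}"
    proof (rule ccontr)
      assume "rainbow_triangles E C' \<noteq> {}"
      then obtain t where "t \<in> rainbow_triangles E C'" by blast
      then obtain p q r where r: "rb E C' p q r" using mem_rt[of t E C'] by auto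
      have ed: "p \<noteq> q" "q \<noteq> r" "p \<noteq> r" using rb_edges[OF r] by auto
      show False
      proof (cases "{p,q,r} = {x,y,z}")
        case True
        then have "e1 \<in> {{p,q},{q,r},{p,r}}" "e2 \<in> {{p,q},{q,r},{p,r}}" using inP[OF True ed] by simp_all
        moreover have "C' e1 = C' e2" unfolding C'_def using e12 by simp
        ultimately show False using rb_dist[OF r _ _ e12] by blast
      next
        case False
        have nrb: "\<not> rb E C p q r" using onlyT[of p q r] False by auto
        show False
        proof (cases "e1 \<in> {{p,q},{q,r},{p,r}}")
          case False
          then have "\<forall>f\<in>{{p,q},{q,r},{p,r}}. C' f = C f" unfolding C'_def by auto
          then show False using rb_cong[of p q r C' C E] r nrb by simp
        next
          case True
          then consider "e1 = {p,q}" | "e1 = {q,r}" | "e1 = {p,r}" by blast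
          then show False
          proof cases
            case 1
            show False using R2core[OF r 1 C'_def u nrb] by blast
          next
            case 2
            have r2: "rb E C' q r p" using rb_perm1[OF r] .
            have "\<not> rb E C q r p" using nrb rb_perm1[of E C q r p] rb_perm1[of E C r p q] by blast
            then show False using R2core[OF r2 2 C'_def u] by blast
          next
            case 3
            have r3: "rb E C' p r q" using rb_perm2[OF r] .
            have "\<not> rb E C p r q" using nrb rb_perm2[of E C p r q] by blast
            then show False using R2core[OF r3 3 C'_def u] by blast
          qed
        qed
      qed
    qed
    have img: "C' ` E = C ` E - {C e1}"
    proof
      show "C' ` E \<subseteq> C ` E - {C e1}"
      proof
        fix c assume "c \<in> C' ` E"
        then obtain e where e: "e \<in> E" "c = C' e" by auto
        show "c \<in> C ` E - {C e1}"
        proof (cases "e = e1")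
          case True
          then show ?thesis using e e2E c12 unfolding C'_def by auto
        next
          case False
          then have "C e \<noteq> C e1" using u e by auto
          then show ?thesis using e False unfolding C'_def by auto
        qed
      qed
      show "C ` E - {C e1} \<subseteq> C' ` E"
      proof
        fix c assume c: "c \<in> C ` E - {C e1}"
        then obtain e where e: "e \<in> E" "c = C e" by auto
        then have "e \<noteq> e1" using c by auto
        then have "C' e = c" using e unfolding C'_def by simp
        then show "c \<in> C' ` E" using e by force
      qed
    qed
    have "C e1 \<in> C ` E" using e1E by simp
    then have cimg: "card (C' ` E) + 1 = card (C ` E)" unfolding img
      using card_Suc_Diff1[OF finite_imageI[OF fE] \<open>C e1 \<in> C ` E\<close>] by simp
    have "card E + card (C' ` E) + 1 + (if complete_graph V E then 0 else 1) \<le> (n + 1) choose 2"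
      using mainA[OF sg n_def[symmetric] n1 nr] .
    then have "card E + card (C ` E) + (if complete_graph V E then 0 else 1) \<le> (n + 1) choose 2"
      using cimg by linarith
    then have "complete_graph V E \<and> card E + card (C ` E) = (n + 1) choose 2"
      using ge by (cases "complete_graph V E") auto
    then show ?thesis unfolding num_colors_def n_def by simp
  qed
qed

end
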